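(* Let $X$ be a strongly $0$-dimensional metrizable space with $\operatorname{card}(X)\le\mathfrak{c}$. Then for every $d\in\mathrm{Met}(X)$ and every $\epsilon\in(0,\infty)$ there exists $e\in\mathrm{LI}(X)$ with $\mathcal{D}_X(d,e)\le\epsilon$; that is, $\mathrm{LI}(X)$ is dense in $(\mathrm{Met}(X),\mathcal{D}_X)$. Moreover, if $X$ is completely metrizable, then $e$ can be chosen to be a complete metric.
   Context: For a topological space $X$ and $S\subseteq[0,\infty)$ with $0\in S$, $\mathrm{Met}(X;S)$ denotes the set of all metrics on $X$ taking values in $S$ and generating the topology of $X$; $\mathrm{Met}(X)=\mathrm{Met}(X;[0,\infty))$. The supremum metric on $\mathrm{Met}(X)$ is $\mathcal{D}_X(d,e)=\sup_{x,y\in X}|d(x,y)-e(x,y)|$ (a metric with values in $[0,\infty]$), and $\mathrm{Met}(X)$ carries the topology generated by its open balls. $\mathfrak{c}$ is the cardinality of the continuum. A topological space is strongly $0$-dimensional if for every pair $A,B$ of disjoint closed subsets there is a clopen set $V$ with $A\subseteq V$ and $V\cap B=\emptyset$. $\mathrm{LI}(X)$ is the set of all $d\in\mathrm{Met}(X)$ such that whenever $x,y,u,v\in X$ satisfy $x\neq y$, $u\neq v$ and $\{x,y\}\neq\{u,v\}$, the two reals $d(x,y)$ and $d(u,v)$ are linearly independent over $\mathbb{Q}$. *)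

theory Defs
  imports "HOL-Analysis.Analysis" "HOL-Library.Equipollence"
begin

text \<open>Met(X): metrics on the carrier of X generating the topology of X.
  A metric is a function on 'a; only its values on topspace X matter.\<close>
definition Met :: "'a topology \<Rightarrow> ('a \<Rightarrow> 'a \<Rightarrow> real) set" where
  "Met X = {d. Metric_space (topspace X) d \<and> Metric_space.mtopology (topspace X) d = X}"

definition sup_metric_dist :: "'a topology \<Rightarrow> ('a \<Rightarrow> 'a \<Rightarrow> real) \<Rightarrow> ('a \<Rightarrow> 'a \<Rightarrow> real) \<Rightarrow> ereal" where
  "sup_metric_dist X d e = (SUP p \<in> topspace X \<times> topspace X. ereal \<bar>d (fst p) (snd p) - e (fst p) (snd p)\<bar>)"

definition strongly_zero_dimensional :: "'a topology \<Rightarrow> bool" where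
  "strongly_zero_dimensional X \<longleftrightarrow>
     (\<forall>A B. closedin X A \<and> closedin X B \<and> A \<inter> B = {} \<longrightarrow>
        (\<exists>V. openin X V \<and> closedin X V \<and> A \<subseteq> V \<and> V \<inter> B = {}))"

definition rat_lin_indep2 :: "real \<Rightarrow> real \<Rightarrow> bool" where
  "rat_lin_indep2 r s \<longleftrightarrow> (\<forall>a b :: rat. of_rat a * r + of_rat b * s = 0 \<longrightarrow> a = 0 \<and> b = 0)"

definition LI :: "'a topology \<Rightarrow> ('a \<Rightarrow> 'a \<Rightarrow> real) set" where
  "LI X = {d \<in> Met X. \<forall>x\<in>topspace X. \<forall>y\<in>topspace X. \<forall>u\<in>topspace X. \<forall>v\<in>topspace X.
            x \<noteq> y \<and> u \<noteq> v \<and> {x, y} \<noteq> {u, v} \<longrightarrow> rat_lin_indep2 (d x y) (d u v)}"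

end

theory Submission
  imports Defs "HOL-Library.Nat_Bijection"
begin


lemma liouville_like:
  fixes c :: "nat \<Rightarrow> int" and C :: real
  assumes bnd: "\<And>n. \<bar>real_of_int (c n)\<bar> \<le> C"
    and rat: "(\<Sum>n. real_of_int (c n) * (1/10)^(n*n)) \<in> \<rat>"
  shows "\<exists>N0. \<forall>n\<ge>N0. c n = 0"
proof -
  define f where "f n = real_of_int (c n) * (1/10::real)^(n*n)" for n
  have C0: "0 \<le> C" using bnd[of 0] by linarith
  have fb: "\<bar>f n\<bar> \<le> C * (1/10)^n" for n
  proof -
    have "(1/10::real)^(n*n) \<le> (1/10)^n"
      by (rule power_decreasing) (auto simp: le_square)
    then show ?thesis unfolding f_def abs_mult
      by (intro mult_mono) (auto simp: bnd C0)
  qed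
  have sumf: "summable f"
    by (rule summable_comparison_test'[where g="\<lambda>n. C * (1/10)^n" and N=0])
       (auto simp: fb summable_geometric)
  obtain p q where pq: "q > 0" "suminf f = real_of_int p / real_of_int q"
    using rat unfolding f_def[symmetric] by (metis Rats_cases')
  define T where "T N = (\<Sum>n. f (n + Suc N))" for N
  have sumT: "summable (\<lambda>n. f (n + k))" for k
    using sumf by (simp add: summable_iff_shift)
  have Tint: "real_of_int q * 10^(N*N) * T N \<in> \<int>" for N
  proof -
    have split: "suminf f = T N + (\<Sum>i<Suc N. f i)"
      unfolding T_def by (rule suminf_split_initial_segment[OF sumf])
    have A: "real_of_int q * 10^(N*N) * suminf f \<in> \<int>"
      using pq by simp
    have B: "real_of_int q * 10^(N*N) * (\<Sum>i<Suc N. f i) \<in> \<int>"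
    proof -
      have "real_of_int q * 10^(N*N) * (\<Sum>i<Suc N. f i)
          = (\<Sum>i<Suc N. real_of_int q * real_of_int (c i) * 10^(N*N - i*i))"
        unfolding sum_distrib_left
      proof (rule sum.cong[OF refl])
        fix i assume "i \<in> {..<Suc N}"
        then have "i*i \<le> N*N" by (simp add: mult_le_mono)
        then have "(10::real)^(N*N) = 10^(N*N - i*i) * 10^(i*i)"
          by (simp add: power_add[symmetric])
        then show "real_of_int q * 10 ^ (N * N) * f i = real_of_int q * real_of_int (c i) * 10 ^ (N * N - i * i)"
          unfolding f_def by (simp add: power_one_over field_simps)
      qed
      also have "\<dots> \<in> \<int>" by (intro Ints_sum) auto
      finally show ?thesis .
    qed
    have "real_of_int q * 10^(N*N) * T N = real_of_int q * 10^(N*N) * suminf f - real_of_int q * 10^(N*N) * (\<Sum>i<Suc N. f i)"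
      using split by (simp add: algebra_simps)
    then show ?thesis using A B by (simp add: Ints_diff)
  qed
  have Tbound: "\<bar>real_of_int q * 10^(N*N) * T N\<bar> \<le> real_of_int q * C * (1/10)^N" for N
  proof -
    have g: "\<bar>10^(N*N) * f (n + Suc N)\<bar> \<le> C * ((1/10)^Suc N * (1/10)^n)" for n
    proof -
      have le: "N*N + (n + Suc N) \<le> (n + Suc N) * (n + Suc N)" by (simp add: algebra_simps)
      have "(10::real)^(N*N) * (1/10)^((n + Suc N)*(n + Suc N)) \<le> (10::real)^(N*N) * (1/10)^(N*N + (n + Suc N))"
        by (intro mult_left_mono power_decreasing le) auto
      also have "\<dots> = (1/10)^(n + Suc N)" by (simp add: power_add power_one_over)
      finally have h: "(10::real)^(N*N) * (1/10)^((n + Suc N)*(n + Suc N)) \<le> (1/10)^(n + Suc N)" .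
      have "\<bar>10^(N*N) * f (n + Suc N)\<bar> = \<bar>real_of_int (c (n + Suc N))\<bar> * ((10::real)^(N*N) * (1/10)^((n + Suc N)*(n + Suc N)))"
        unfolding f_def by (simp add: abs_mult)
      also have "\<dots> \<le> C * (1/10)^(n + Suc N)"
        by (intro mult_mono h bnd) (auto simp: C0)
      finally show ?thesis by (simp add: power_add mult.commute)
    qed
    have sg: "summable (\<lambda>n. C * ((1/10)^Suc N * (1/10::real)^n))"
      by (intro summable_mult summable_geometric) auto
    have "\<bar>10^(N*N) * T N\<bar> = \<bar>\<Sum>n. 10^(N*N) * f (n + Suc N)\<bar>"
      unfolding T_def by (subst suminf_mult[OF sumT]) simp
    also have "\<dots> \<le> (\<Sum>n. C * ((1/10)^Suc N * (1/10::real)^n))"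
    proof -
      have sh: "summable (\<lambda>n. \<bar>10^(N*N) * f (n + Suc N)\<bar>)"
        by (rule summable_comparison_test'[OF sg, where N=0]) (use g in auto)
      have "\<bar>\<Sum>n. 10^(N*N) * f (n + Suc N)\<bar> \<le> (\<Sum>n. \<bar>10^(N*N) * f (n + Suc N)\<bar>)"
        using summable_norm[OF sh[unfolded real_norm_def[symmetric]]] by simp
      also have "\<dots> \<le> (\<Sum>n. C * ((1/10)^Suc N * (1/10::real)^n))"
        by (rule suminf_le[OF g sh sg])
      finally show ?thesis .
    qed
    also have "\<dots> = C * (1/10)^Suc N * (10/9)"
    proof -
      have "(\<Sum>n. C * ((1/10)^Suc N * (1/10::real)^n)) = (\<Sum>n. (C * (1/10)^Suc N) * (1/10::real)^n)"
        by (simp add: mult.assoc)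
      also have "\<dots> = C * (1/10)^Suc N * (\<Sum>n. (1/10::real)^n)"
        by (rule suminf_mult) (simp add: summable_geometric)
      also have "(\<Sum>n. (1/10::real)^n) = 10/9"
        using suminf_geometric[of "1/10::real"] by simp
      finally show ?thesis by simp
    qed
    also have "\<dots> \<le> C * (1/10)^N"
      using C0 by (simp add: field_simps)
    finally have "\<bar>10^(N*N) * T N\<bar> \<le> C * (1/10)^N" .
    then show ?thesis using pq(1)
      by (simp add: abs_mult mult.assoc mult_left_mono)
  qed
  obtain N1 where N1: "real_of_int q * C * (1/10)^N1 < 1"
  proof -
    have "(\<lambda>N. real_of_int q * C * (1/10::real)^N) \<longlonglongrightarrow> real_of_int q * C * 0"
      by (intro tendsto_intros LIMSEQ_power_zero) auto
    then have "eventually (\<lambda>N. real_of_int q * C * (1/10::real)^N < 1) sequentially"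
      by (rule order_tendstoD) simp
    then show ?thesis using that by (auto simp: eventually_sequentially)
  qed
  have T0: "T N = 0" if "N \<ge> N1" for N
  proof -
    have "(1/10::real)^N \<le> (1/10)^N1" using that by (intro power_decreasing) auto
    then have "real_of_int q * C * (1/10)^N \<le> real_of_int q * C * (1/10)^N1"
      using pq(1) C0 by (intro mult_left_mono) auto
    then have "\<bar>real_of_int q * 10^(N*N) * T N\<bar> < 1" using Tbound[of N] N1 by linarith
    then have "real_of_int q * 10^(N*N) * T N = 0"
      using Tint[of N] Ints_nonzero_abs_ge1 by fastforce
    then show ?thesis using pq(1) by simp
  qed
  have "c n = 0" if "n \<ge> Suc N1" for n
  proof -
    define N where "N = n - 1"
    have N: "n = Suc N" "N \<ge> N1" using that unfolding N_def by auto
    have "T N = f (Suc N) + T (Suc N)"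
    proof -
      have "T (Suc N) = (\<Sum>m. f (Suc m + Suc N))" unfolding T_def by simp
      also have "\<dots> = T N - f (0 + Suc N)"
        unfolding T_def using suminf_split_head[OF sumT[of "Suc N"]] by simp
      finally show ?thesis by simp
    qed
    then have "f (Suc N) = 0" using T0[of N] T0[of "Suc N"] N by simp
    then show ?thesis using N unfolding f_def by simp
  qed
  then show ?thesis by blast
qed




lemma (in Metric_space) exists_alpha:
  assumes "r > 0"
  shows "\<exists>\<alpha>. \<forall>x\<in>M. \<alpha> x \<in> M \<and> d (\<alpha> x) x < r \<and>
     (\<forall>a\<in>M. \<forall>b\<in>M. \<alpha> a \<noteq> \<alpha> b \<longrightarrow> \<not> d (\<alpha> a) b < r \<or> \<not> d (\<alpha> b) a < r)"
proof -
  obtain R :: "'a rel" where R0: "Well_order R \<and> Field R = UNIV" using well_ordering by (rule exE)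
  interpret wo_rel R unfolding wo_rel_def using R0 by blast
  have R: "Field R = UNIV" using R0 by blast
  define \<alpha> where "\<alpha> x = minim {c\<in>M. d c x < r}" for x
  have ne: "{c\<in>M. d c x < r} \<noteq> {}" if "x \<in> M" for x
  proof -
    have "x \<in> {c\<in>M. d c x < r}" using assms that by simp
    then show ?thesis by blast
  qed
  have in1: "x \<in> M \<Longrightarrow> \<alpha> x \<in> {c\<in>M. d c x < r}" for x
    unfolding \<alpha>_def by (rule minim_in) (use R ne in auto)
  have lst: "c \<in> M \<Longrightarrow> d c x < r \<Longrightarrow> (\<alpha> x, c) \<in> R" for x c
    unfolding \<alpha>_def by (rule minim_least) (use R in auto)
  show ?thesis
  proof (intro exI[of _ \<alpha>] ballI conjI impI)
    fix x assume "x \<in> M" then show "\<alpha> x \<in> M" "d (\<alpha> x) x < r" using in1 by auto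
  next
    fix a b assume ab: "a \<in> M" "b \<in> M" "\<alpha> a \<noteq> \<alpha> b"
    show "\<not> d (\<alpha> a) b < r \<or> \<not> d (\<alpha> b) a < r"
    proof (rule ccontr)
      assume "\<not> (\<not> d (\<alpha> a) b < r \<or> \<not> d (\<alpha> b) a < r)"
      then have h: "d (\<alpha> a) b < r" "d (\<alpha> b) a < r" by auto
      have "(\<alpha> b, \<alpha> a) \<in> R" using lst[OF _ h(1)] in1[OF ab(1)] by auto
      moreover have "(\<alpha> a, \<alpha> b) \<in> R" using lst[OF _ h(2)] in1[OF ab(2)] by auto
      ultimately have "\<alpha> b = \<alpha> a" by (rule antisymD[OF ANTISYM])
      then show False using ab(3) by simp
    qed
  qed
qed

lemma (in Metric_space) clopen_partition:
  assumes sz: "strongly_zero_dimensional mtopology" and \<delta>: "\<delta> > 0"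
  shows "\<exists>cell. \<forall>x\<in>M. x \<in> cell x \<and> cell x \<subseteq> M \<and> openin mtopology (cell x) \<and>
           (\<forall>y\<in>cell x. cell y = cell x \<and> d x y < \<delta>)"
proof -
  define r where "r = \<delta>/2"
  have r: "r > 0" using \<delta> by (simp add: r_def)
  obtain \<alpha> where alall: "\<forall>x\<in>M. \<alpha> x \<in> M \<and> d (\<alpha> x) x < r \<and>
     (\<forall>a\<in>M. \<forall>b\<in>M. \<alpha> a \<noteq> \<alpha> b \<longrightarrow> \<not> d (\<alpha> a) b < r \<or> \<not> d (\<alpha> b) a < r)"
    using exists_alpha[OF r] by blast
  have al: "\<And>x. x\<in>M \<Longrightarrow> \<alpha> x \<in> M \<and> d (\<alpha> x) x < r" using alall by blast
  have alsep: "\<And>a b. a\<in>M \<Longrightarrow> b\<in>M \<Longrightarrow> \<alpha> a \<noteq> \<alpha> b \<Longrightarrow> \<not> d (\<alpha> a) b < r \<or> \<not> d (\<alpha> b) a < r"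
    using alall by blast
  define rr where "rr n = r / (3 * real (Suc n))" for n
  have rr: "rr n > 0" for n using r by (simp add: rr_def)
  define E where "E n = {a\<in>M. mball a (3*rr n) \<subseteq> mball (\<alpha> a) r}" for n
  define Wn where "Wn n = (\<Union>a\<in>E n. mball a (3/2*rr n))" for n
  define A where "A n = mtopology closure_of (\<Union>a\<in>E n. mball a (rr n))" for n
  have sep: "3*rr n \<le> d a b" if "a \<in> E n" "b \<in> E n" "\<alpha> a \<noteq> \<alpha> b" for a b n
  proof -
    have M: "a \<in> M" "b \<in> M" using that by (auto simp: E_def)
    from alsep[OF M that(3)] show ?thesis
    proof
      assume "\<not> d (\<alpha> a) b < r"
      then have "b \<notin> mball a (3*rr n)" using that(1) M by (auto simp: E_def)
      then show ?thesis using M by auto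
    next
      assume "\<not> d (\<alpha> b) a < r"
      then have "a \<notin> mball b (3*rr n)" using that(2) M by (auto simp: E_def)
      then show ?thesis using M by (auto simp: commute)
    qed
  qed
  have uniq: "\<alpha> a = \<alpha> b" if "a \<in> E n" "b \<in> E n" "x \<in> mball a (3/2*rr n)" "x \<in> mball b (3/2*rr n)" for a b x n
  proof (rule ccontr)
    assume "\<alpha> a \<noteq> \<alpha> b"
    then have "3*rr n \<le> d a b" using sep that by blast
    moreover have "d a b \<le> d a x + d x b" using that by (auto intro: triangle)
    ultimately show False using that by (auto simp: commute)
  qed
  have Wopen: "openin mtopology (Wn n)" for n unfolding Wn_def by auto
  have AW: "A n \<subseteq> Wn n" for n
  proof
    fix y assume "y \<in> A n"
    then have y: "y \<in> M" "\<And>T. y \<in> T \<Longrightarrow> openin mtopology T \<Longrightarrow> \<exists>z. z \<in> (\<Union>a\<in>E n. mball a (rr n)) \<and> z \<in> T"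
      unfolding A_def in_closure_of by auto
    obtain z where z: "z \<in> (\<Union>a\<in>E n. mball a (rr n))" "z \<in> mball y (rr n / 2)"
      using y(2)[of "mball y (rr n / 2)"] y(1) rr by auto
    then obtain a where a: "a \<in> E n" "z \<in> mball a (rr n)" by auto
    have "d a y \<le> d a z + d z y" using a z by (auto intro: triangle)
    then have "d a y < 3/2*rr n" using a z by (auto simp: commute)
    then show "y \<in> Wn n" using a y unfolding Wn_def by auto
  qed
  have cover: "\<exists>n. x \<in> E n" if "x \<in> M" for x
  proof -
    have xin: "x \<in> mball (\<alpha> x) r" using al[OF that] that by simp
    have "openin mtopology (mball (\<alpha> x) r)" by (rule openin_mball)
    then have "\<exists>s>0. mball x s \<subseteq> mball (\<alpha> x) r"
      using xin unfolding openin_mtopology by blast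
    then obtain s where s: "s > 0" "mball x s \<subseteq> mball (\<alpha> x) r" by blast
    obtain n0 :: nat where n0: "r / s < real n0" using reals_Archimedean2 by (rule exE)
    have n: "r / s < real (Suc n0)" using n0 by simp
    define n where "n = n0"
    note n = n[folded n_def]
    have "3 * rr n = r / real (Suc n)" unfolding rr_def by (simp add: field_simps)
    also have "\<dots> < s" using n s r by (simp add: field_simps)
    finally have "mball x (3*rr n) \<subseteq> mball x s" by (intro mball_subset_concentric) simp
    then have "mball x (3*rr n) \<subseteq> mball (\<alpha> x) r" using s(2) by (rule order_trans)
    then have "x \<in> E n" using that unfolding E_def by blast
    then show ?thesis by blast
  qed
  have coverA: "\<exists>n. x \<in> A n" if xM: "x \<in> M" for x
  proof -
    obtain n where n: "x \<in> E n" using cover xM by blast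
    have "x \<in> (\<Union>a\<in>E n. mball a (rr n))" using n xM rr by auto
    moreover have "(\<Union>a\<in>E n. mball a (rr n)) \<subseteq> topspace mtopology" by auto
    ultimately show ?thesis unfolding A_def using closure_of_subset by blast
  qed
  have "\<forall>n. \<exists>V. openin mtopology V \<and> closedin mtopology V \<and> A n \<subseteq> V \<and> V \<inter> (M - Wn n) = {}"
  proof
    fix n
    have "closedin mtopology (A n)" unfolding A_def by simp
    moreover have "closedin mtopology (M - Wn n)" using Wopen[of n] by (metis closedin_diff closedin_topspace topspace_mtopology)
    moreover have "A n \<inter> (M - Wn n) = {}" using AW by auto
    ultimately show "\<exists>V. openin mtopology V \<and> closedin mtopology V \<and> A n \<subseteq> V \<and> V \<inter> (M - Wn n) = {}"
      using sz unfolding strongly_zero_dimensional_def by blast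
  qed
  then obtain V where Vall: "\<forall>n. openin mtopology (V n) \<and> closedin mtopology (V n) \<and> A n \<subseteq> V n \<and> V n \<inter> (M - Wn n) = {}"
    using choice[of "\<lambda>n V. openin mtopology V \<and> closedin mtopology V \<and> A n \<subseteq> V \<and> V \<inter> (M - Wn n) = {}"] by blast
  have V: "\<And>n. openin mtopology (V n)" "\<And>n. closedin mtopology (V n)"
      "\<And>n. A n \<subseteq> V n" "\<And>n. V n \<inter> (M - Wn n) = {}" using Vall by auto
  have VW: "V n \<subseteq> Wn n" for n using V(4)[of n] openin_subset[OF V(1)[of n]] by auto
  define lv where "lv x = (LEAST n. x \<in> V n)" for x
  have lvV: "x \<in> V (lv x)" if xM: "x \<in> M" for x
  proof -
    obtain n where "x \<in> A n" using coverA[OF xM] by blast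
    then have "x \<in> V n" using V(3) by blast
    then show ?thesis unfolding lv_def by (rule LeastI)
  qed
  have lvlt: "x \<notin> V i" if "i < lv x" for x i
    using that unfolding lv_def by (rule not_less_Least)
  define cx where "cx x = \<alpha> (SOME a. a \<in> E (lv x) \<and> x \<in> mball a (3/2*rr (lv x)))" for x
  have K: "\<exists>a. a \<in> E (lv x) \<and> x \<in> mball a (3/2*rr (lv x)) \<and> cx x = \<alpha> a" if "x \<in> M" for x
  proof -
    have "x \<in> Wn (lv x)" using lvV[OF that] VW by blast
    then have ex: "\<exists>a. a \<in> E (lv x) \<and> x \<in> mball a (3/2*rr (lv x))" unfolding Wn_def by auto
    show ?thesis using someI_ex[OF ex] unfolding cx_def by blast
  qed
  have K2: "cx x = \<alpha> a" if xa: "x \<in> M" "a \<in> E (lv x)" "x \<in> mball a (3/2*rr (lv x))" for x a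
  proof -
    obtain b where b: "b \<in> E (lv x)" "x \<in> mball b (3/2*rr (lv x))" "cx x = \<alpha> b" using K[OF xa(1)] by blast
    show ?thesis using uniq[OF b(1) xa(2) b(2) xa(3)] b(3) by simp
  qed
  define cell where "cell x = {y\<in>M. lv y = lv x \<and> cx y = cx x}" for x
  show ?thesis
  proof (intro exI[of _ cell] ballI conjI)
    fix x assume x: "x \<in> M"
    show "x \<in> cell x" "cell x \<subseteq> M" using x by (auto simp: cell_def)
    show "openin mtopology (cell x)"
      unfolding openin_subopen[of _ "cell x"]
    proof
      fix y assume y: "y \<in> cell x"
      then have yM: "y \<in> M" by (auto simp: cell_def)
      define n where "n = lv y"
      obtain a where a: "a \<in> E n" "y \<in> mball a (3/2*rr n)" "cx y = \<alpha> a"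
        using K[OF yM] unfolding n_def by blast
      define Ob where "Ob = (V n \<inter> mball a (3/2*rr n)) - (\<Union>i\<in>{..<n}. V i)"
      have "openin mtopology Ob" unfolding Ob_def
        using V(1,2) by (intro openin_diff openin_Int closedin_Union) auto
      moreover have "y \<in> Ob" unfolding Ob_def n_def using lvV[OF yM] a(2) lvlt[of _ y] unfolding n_def by auto
      moreover have "Ob \<subseteq> cell x"
      proof
        fix z assume z: "z \<in> Ob"
        then have zM: "z \<in> M" unfolding Ob_def by auto
        have "lv z = n" unfolding lv_def
          by (rule Least_equality) (use z in \<open>auto simp: Ob_def not_le\<close>)
        moreover have "cx z = \<alpha> a" using K2[OF zM] z a(1) \<open>lv z = n\<close> unfolding Ob_def by auto
        ultimately show "z \<in> cell x" using y a(3) zM unfolding cell_def n_def by auto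
      qed
      ultimately show "\<exists>T. openin mtopology T \<and> y \<in> T \<and> T \<subseteq> cell x" by blast
    qed
    fix y assume y: "y \<in> cell x"
    show "cell y = cell x" using y by (auto simp: cell_def)
    have yM: "y \<in> M" using y by (auto simp: cell_def)
    obtain a where a: "a \<in> E (lv x)" "x \<in> mball a (3/2*rr (lv x))" "cx x = \<alpha> a" using K[OF x] by blast
    obtain b where b: "b \<in> E (lv y)" "y \<in> mball b (3/2*rr (lv y))" "cx y = \<alpha> b" using K[OF yM] by blast
    have ab: "\<alpha> a = \<alpha> b" using a b y by (auto simp: cell_def)
    have "x \<in> mball (\<alpha> a) r"
    proof -
      have "mball a (3/2*rr (lv x)) \<subseteq> mball a (3*rr (lv x))" using rr by (intro mball_subset_concentric) auto
      moreover have "mball a (3*rr (lv x)) \<subseteq> mball (\<alpha> a) r" using a(1) by (simp add: E_def)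
      ultimately show ?thesis using a(2) by blast
    qed
    moreover have "y \<in> mball (\<alpha> b) r"
    proof -
      have "mball b (3/2*rr (lv y)) \<subseteq> mball b (3*rr (lv y))" using rr by (intro mball_subset_concentric) auto
      moreover have "mball b (3*rr (lv y)) \<subseteq> mball (\<alpha> b) r" using b(1) by (simp add: E_def)
      ultimately show ?thesis using b(2) by blast
    qed
    ultimately have "d x (\<alpha> a) < r" "d (\<alpha> a) y < r" using ab by (auto simp: commute)
    moreover have "d x y \<le> d x (\<alpha> a) + d (\<alpha> a) y" using x yM al[OF x] a(1)
      by (intro triangle) (auto simp: E_def al)
    ultimately show "d x y < \<delta>" unfolding r_def by linarith
  qed
qed




lemma mtopology_eqI:
  assumes D: "Metric_space M d" and E: "Metric_space M e"
   and de: "\<And>x r. x\<in>M \<Longrightarrow> r>0 \<Longrightarrow> \<exists>s>0. Metric_space.mball M d x s \<subseteq> Metric_space.mball M e x r"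
   and ed: "\<And>x r. x\<in>M \<Longrightarrow> r>0 \<Longrightarrow> \<exists>s>0. Metric_space.mball M e x s \<subseteq> Metric_space.mball M d x r"
  shows "Metric_space.mtopology M d = Metric_space.mtopology M e"
proof -
  interpret D: Metric_space M d by (rule D)
  interpret E: Metric_space M e by (rule E)
  show ?thesis unfolding topology_eq
  proof (intro allI iffI)
    fix S assume S: "openin D.mtopology S"
    show "openin E.mtopology S" unfolding E.openin_mtopology
    proof (intro conjI allI impI)
      show "S \<subseteq> M" using S D.openin_mtopology by blast
      fix x assume x: "x \<in> S"
      obtain r where r: "r > 0" "D.mball x r \<subseteq> S" using S x D.openin_mtopology by blast
      obtain s where s: "s > 0" "E.mball x s \<subseteq> D.mball x r" using ed[of x r] r \<open>S \<subseteq> M\<close> x by blast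
      show "\<exists>r>0. E.mball x r \<subseteq> S" using s r by blast
    qed
  next
    fix S assume S: "openin E.mtopology S"
    show "openin D.mtopology S" unfolding D.openin_mtopology
    proof (intro conjI allI impI)
      show "S \<subseteq> M" using S E.openin_mtopology by blast
      fix x assume x: "x \<in> S"
      obtain r where r: "r > 0" "E.mball x r \<subseteq> S" using S x E.openin_mtopology by blast
      obtain s where s: "s > 0" "D.mball x s \<subseteq> E.mball x r" using de[of x r] r \<open>S \<subseteq> M\<close> x by blast
      show "\<exists>r>0. D.mball x r \<subseteq> S" using s r by blast
    qed
  qed
qed

definition qe :: "nat \<Rightarrow> real" where "qe k = of_rat (from_nat k)"
definition bitc :: "nat \<Rightarrow> real \<times> real \<Rightarrow> bool" where
  "bitc j p = ((if even j then fst p else snd p) < qe (j div 2))"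

locale LIcon = Metric_space M d for M :: "'a set" and d +
  fixes cell :: "nat \<Rightarrow> 'a \<Rightarrow> 'a set" and \<iota> :: "'a \<Rightarrow> real" and \<epsilon> :: real and K :: nat
  assumes cell_in: "x \<in> M \<Longrightarrow> x \<in> cell n x"
    and cell_sub: "x \<in> M \<Longrightarrow> cell n x \<subseteq> M"
    and cell_open: "x \<in> M \<Longrightarrow> openin mtopology (cell n x)"
    and cell_eq: "x \<in> M \<Longrightarrow> y \<in> cell n x \<Longrightarrow> cell n y = cell n x"
    and cell_small: "x \<in> M \<Longrightarrow> y \<in> cell n x \<Longrightarrow> d x y < \<epsilon> / (8 * real (Suc n))"
    and inj: "inj_on \<iota> M"
    and eps: "\<epsilon> > 0"
    and Kb: "(1/10::real)^K \<le> \<epsilon>/10"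
begin

definition rep where "rep n x = (SOME z. z \<in> cell n x)"
definition code where "code n x y = (min (\<iota> (rep n x)) (\<iota> (rep n y)), max (\<iota> (rep n x)) (\<iota> (rep n y)))"
definition sep where "sep n x y \<longleftrightarrow> (\<exists>i\<le>n. cell i x \<noteq> cell i y)"
definition Si :: "nat \<Rightarrow> 'a \<Rightarrow> 'a \<Rightarrow> int" where
  "Si n x y = (if sep n x y then (if bitc (snd (prod_decode n)) (code (fst (prod_decode n)) x y) then 2 else 1) else 0)"
definition U where "U x y = (\<Sum>n. real_of_int (Si n x y) * (1/10)^(n*n))"
definition ratup where "ratup s = (SOME q. q \<in> \<rat> \<and> s + \<epsilon>/8 \<le> q \<and> q \<le> s + \<epsilon>/4)"
definition F where "F x y = (if cell 0 x = cell 0 y then 0 else ratup (d (rep 0 x) (rep 0 y)))"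
definition e where "e x y = F x y + (1/10)^K * U x y"

lemma rep_in: "x \<in> M \<Longrightarrow> rep n x \<in> cell n x"
  unfolding rep_def by (rule someI) (rule cell_in)

lemma rep_M: "x \<in> M \<Longrightarrow> rep n x \<in> M"
  using rep_in cell_sub by blast

lemma rep_cong: "cell n x = cell n y \<Longrightarrow> rep n x = rep n y"
  unfolding rep_def by simp

lemma cell_same: "x \<in> M \<Longrightarrow> y \<in> M \<Longrightarrow> cell n x = cell n y \<longleftrightarrow> y \<in> cell n x"
  using cell_in[of y n] cell_eq[of x y n] by auto

lemma rep_cell: assumes "x \<in> M" "y \<in> M" "rep n x = rep n y" shows "cell n x = cell n y"
proof -
  have "cell n (rep n x) = cell n x" by (rule cell_eq[OF assms(1) rep_in[OF assms(1)]])
  moreover have "cell n (rep n y) = cell n y" by (rule cell_eq[OF assms(2) rep_in[OF assms(2)]])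
  ultimately show ?thesis using assms(3) by simp
qed

lemma mesh_small: "r > 0 \<Longrightarrow> \<exists>N. \<epsilon> / (8 * real (Suc N)) < r"
proof -
  assume r: "r > 0"
  obtain N :: nat where N: "\<epsilon> / (8 * r) < real N" using reals_Archimedean2 by (rule exE)
  have "\<epsilon> / (8 * r) < real (Suc N)" using N by simp
  then have "\<epsilon> / (8 * real (Suc N)) < r" using r eps by (simp add: field_simps)
  then show ?thesis by blast
qed

lemma sep_sym: "sep n x y = sep n y x" unfolding sep_def by blast
lemma code_sym: "code n x y = code n y x" unfolding code_def by (simp add: min.commute max.commute)
lemma Si_sym: "Si n x y = Si n y x" unfolding Si_def using sep_sym code_sym by simp

lemma Si_bounds: "0 \<le> Si n x y" "Si n x y \<le> 2" unfolding Si_def by auto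
lemma Si_pos: "sep n x y \<Longrightarrow> 1 \<le> Si n x y" unfolding Si_def by auto
lemma Si_zero: "\<not> sep n x y \<Longrightarrow> Si n x y = 0" unfolding Si_def by auto
lemma Si_12: "sep n x y \<Longrightarrow> Si n x y = 1 \<or> Si n x y = 2" unfolding Si_def by auto

lemma fst_decode_le: "fst (prod_decode n) \<le> n"
  using le_prod_encode_1[of "fst (prod_decode n)" "snd (prod_decode n)"] by simp

lemma Si_cong: assumes "\<not> sep n x y" shows "Si n x z = Si n y z"
proof -
  have c: "\<forall>i\<le>n. cell i x = cell i y" using assms unfolding sep_def by blast
  then have "sep n x z = sep n y z" unfolding sep_def by auto
  moreover have "code (fst (prod_decode n)) x z = code (fst (prod_decode n)) y z"
  proof -
    have "cell (fst (prod_decode n)) x = cell (fst (prod_decode n)) y" using c fst_decode_le by blast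
    then have "rep (fst (prod_decode n)) x = rep (fst (prod_decode n)) y" by (rule rep_cong)
    then show ?thesis unfolding code_def by simp
  qed
  ultimately show ?thesis unfolding Si_def by simp
qed

lemma Si_tri: "Si n x z \<le> Si n x y + Si n y z"
proof (cases "sep n x y")
  case True
  show ?thesis
  proof (cases "sep n y z")
    case True
    then show ?thesis using Si_pos[OF \<open>sep n x y\<close>] Si_pos[OF True] Si_bounds[of n x z] by linarith
  next
    case False
    have "Si n x z = Si n z x" by (rule Si_sym)
    also have "\<dots> = Si n y x" using Si_cong[of n z y x] False sep_sym by metis
    also have "\<dots> = Si n x y" by (rule Si_sym)
    finally show ?thesis using Si_bounds[of n y z] by linarith
  qed
next
  case False
  then show ?thesis using Si_cong[OF False, of z] Si_bounds[of n x y] by linarith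
qed

lemma geo_summ: "summable (\<lambda>n. c * (1/10::real)^n)"
  by (intro summable_mult summable_geometric) auto

lemma term_le: "\<bar>real_of_int (Si n x y) * (1/10::real)^(n*n)\<bar> \<le> 2 * (1/10)^n"
proof -
  have "(1/10::real)^(n*n) \<le> (1/10)^n" by (rule power_decreasing) (auto simp: le_square)
  moreover have "\<bar>real_of_int (Si n x y)\<bar> \<le> 2" using Si_bounds[of n x y] by auto
  ultimately show ?thesis unfolding abs_mult by (intro mult_mono) auto
qed

lemma summ: "summable (\<lambda>n. real_of_int (Si n x y) * (1/10::real)^(n*n))"
  by (rule summable_comparison_test'[OF geo_summ[of 2], where N=0]) (use term_le in auto)

lemma term_nonneg: "0 \<le> real_of_int (Si n x y) * (1/10::real)^(n*n)"
  using Si_bounds[of n x y] by simp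

lemma U_nonneg: "0 \<le> U x y"
  unfolding U_def by (rule suminf_nonneg[OF summ term_nonneg])

lemma U_sym: "U x y = U y x" unfolding U_def using Si_sym by simp

lemma U_tri: "U x z \<le> U x y + U y z"
proof -
  have "U x y + U y z = (\<Sum>n. real_of_int (Si n x y) * (1/10::real)^(n*n) + real_of_int (Si n y z) * (1/10::real)^(n*n))"
    unfolding U_def by (rule suminf_add[OF summ summ])
  moreover have "U x z \<le> \<dots>" unfolding U_def
  proof (rule suminf_le)
    fix n show "real_of_int (Si n x z) * (1/10::real)^(n*n) \<le> real_of_int (Si n x y) * (1/10::real)^(n*n) + real_of_int (Si n y z) * (1/10::real)^(n*n)"
      using Si_tri[of n x z y] by (simp add: distrib_right[symmetric])
  qed (auto intro: summ summable_add)
  ultimately show ?thesis by simp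
qed

lemma geo_sum_val: "(\<Sum>n. c * (1/10::real)^n) = c * (10/9)"
proof -
  have "(\<Sum>n. c * (1/10::real)^n) = c * (\<Sum>n. (1/10::real)^n)"
    by (rule suminf_mult) (simp add: summable_geometric)
  also have "(\<Sum>n. (1/10::real)^n) = 10/9" using suminf_geometric[of "1/10::real"] by simp
  finally show ?thesis by simp
qed

lemma U_le: "U x y \<le> 20/9"
proof -
  have "U x y \<le> (\<Sum>n. 2 * (1/10::real)^n)" unfolding U_def
    by (rule suminf_le[OF _ summ geo_summ]) (use term_le in \<open>auto simp: abs_le_iff\<close>)
  then show ?thesis using geo_sum_val[of 2] by simp
qed

lemma U_tail: assumes "\<forall>i\<le>N. cell i x = cell i y" shows "U x y \<le> (1/10)^N"
proof -
  define f where "f n = real_of_int (Si n x y) * (1/10::real)^(n*n)" for n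
  have f0: "f n = 0" if "n < Suc N" for n
    using that assms Si_zero[of n x y] unfolding f_def sep_def by auto
  have "U x y = (\<Sum>n. f (n + Suc N)) + (\<Sum>i<Suc N. f i)"
    unfolding U_def f_def[symmetric] by (rule suminf_split_initial_segment) (simp add: f_def summ)
  also have "(\<Sum>i<Suc N. f i) = 0" using f0 by simp
  also have "(\<Sum>n. f (n + Suc N)) \<le> (\<Sum>n. (2 * (1/10)^Suc N) * (1/10::real)^n)"
  proof (rule suminf_le)
    fix n show "f (n + Suc N) \<le> (2 * (1/10)^Suc N) * (1/10::real)^n"
      using term_le[of "n + Suc N" x y] unfolding f_def by (simp add: abs_le_iff power_add mult.commute mult.left_commute)
  next
    have "summable f" unfolding f_def by (rule summ)
    then show "summable (\<lambda>n. f (n + Suc N))" by (simp only: summable_iff_shift)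
  qed (rule geo_summ)
  also have "\<dots> = 2 * (1/10)^Suc N * (10/9)" by (rule geo_sum_val)
  also have "\<dots> \<le> (1/10)^N" by simp
  finally show ?thesis by simp
qed

lemma U_ge: assumes "sep N x y" shows "(1/10)^(N*N) \<le> U x y"
proof -
  have "(\<Sum>n\<in>{N}. real_of_int (Si n x y) * (1/10::real)^(n*n)) \<le> U x y"
    unfolding U_def by (rule sum_le_suminf[OF summ]) (auto intro: term_nonneg)
  then have h1: "real_of_int (Si N x y) * (1/10)^(N*N) \<le> U x y" by simp
  have h2: "1 * (1/10::real)^(N*N) \<le> real_of_int (Si N x y) * (1/10)^(N*N)"
    by (rule mult_right_mono) (use Si_pos[OF assms] in auto)
  show ?thesis using h1 h2 by linarith
qed

lemma sep_of_far: assumes "x \<in> M" "y \<in> M" "\<epsilon> / (8 * real (Suc N)) \<le> d x y" shows "sep N x y"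
proof -
  have "cell N x \<noteq> cell N y"
  proof
    assume "cell N x = cell N y"
    then have "y \<in> cell N x" using cell_same assms by blast
    then show False using cell_small[OF assms(1)] assms(3) by force
  qed
  then show ?thesis unfolding sep_def by blast
qed

lemma U_pos: assumes "x \<in> M" "y \<in> M" "x \<noteq> y" shows "0 < U x y"
proof -
  have "0 < d x y" using assms by simp
  then obtain N where N: "\<epsilon> / (8 * real (Suc N)) < d x y" using mesh_small by blast
  have "sep N x y" by (rule sep_of_far) (use assms N in auto)
  then have "(1/10)^(N*N) \<le> U x y" by (rule U_ge)
  moreover have "(0::real) < (1/10)^(N*N)" by simp
  ultimately show ?thesis by linarith
qed

lemma ratup: "ratup s \<in> \<rat> \<and> s + \<epsilon>/8 \<le> ratup s \<and> ratup s \<le> s + \<epsilon>/4"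
proof -
  have "s + \<epsilon>/8 < s + \<epsilon>/4" using eps by simp
  then obtain q where "q \<in> \<rat>" "s + \<epsilon>/8 < q" "q < s + \<epsilon>/4" using Rats_dense_in_real by blast
  then have "\<exists>q. q \<in> \<rat> \<and> s + \<epsilon>/8 \<le> q \<and> q \<le> s + \<epsilon>/4" by (intro exI[of _ q]) auto
  then show ?thesis unfolding ratup_def by (rule someI_ex)
qed

lemma F_nonneg: "0 \<le> F x y"
proof (cases "cell 0 x = cell 0 y")
  case True then show ?thesis by (simp add: F_def)
next
  case False
  then have "F x y = ratup (d (rep 0 x) (rep 0 y))" by (simp add: F_def)
  moreover have "d (rep 0 x) (rep 0 y) + \<epsilon>/8 \<le> ratup (d (rep 0 x) (rep 0 y))" using ratup by blast
  ultimately show ?thesis using eps nonneg[of "rep 0 x" "rep 0 y"] by linarith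
qed

lemma F_sym: "F x y = F y x"
proof -
  have "(cell 0 y = cell 0 x) = (cell 0 x = cell 0 y)" by blast
  then show ?thesis unfolding F_def by (simp add: commute)
qed

lemma F_rat: "F x y \<in> \<rat>" unfolding F_def using ratup by auto

lemma F_tri: assumes "x \<in> M" "y \<in> M" "z \<in> M" shows "F x z \<le> F x y + F y z"
proof (cases "cell 0 x = cell 0 z")
  case True then show ?thesis using F_nonneg[of x y] F_nonneg[of y z] by (simp add: F_def)
next
  case xz: False
  show ?thesis
  proof (cases "cell 0 x = cell 0 y")
    case True
    then have "F x z = F y z" unfolding F_def using rep_cong[OF True] by simp
    then show ?thesis using F_nonneg[of x y] by simp
  next
    case xy: False
    show ?thesis
    proof (cases "cell 0 y = cell 0 z")
      case True
      then have "F x z = F x y" unfolding F_def using rep_cong[OF True] by simp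
      then show ?thesis using F_nonneg[of y z] by simp
    next
      case yz: False
      have M: "rep 0 x \<in> M" "rep 0 y \<in> M" "rep 0 z \<in> M" using rep_M assms by auto
      have "F x z \<le> d (rep 0 x) (rep 0 z) + \<epsilon>/4" using xz ratup by (simp add: F_def)
      also have "\<dots> \<le> d (rep 0 x) (rep 0 y) + d (rep 0 y) (rep 0 z) + \<epsilon>/4" using triangle[OF M(1,2,3)] by simp
      also have "\<dots> \<le> F x y + F y z" using xy yz ratup[of "d (rep 0 x) (rep 0 y)"] ratup[of "d (rep 0 y) (rep 0 z)"]
        by (simp add: F_def)
      finally show ?thesis .
    qed
  qed
qed

lemma F_close: assumes "x \<in> M" "y \<in> M" shows "\<bar>F x y - d x y\<bar> \<le> \<epsilon>/2"
proof (cases "cell 0 x = cell 0 y")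
  case True
  then have "y \<in> cell 0 x" using cell_same assms by blast
  then have "d x y < \<epsilon>/8" using cell_small[OF assms(1), of y 0] by simp
  have "F x y = 0" using True by (simp add: F_def)
  then have "\<bar>F x y - d x y\<bar> = d x y" by simp
  then show ?thesis using \<open>d x y < \<epsilon>/8\<close> eps by linarith
next
  case False
  define a where "a = rep 0 x"
  define b where "b = rep 0 y"
  have ab: "a \<in> M" "b \<in> M" using rep_M assms by (auto simp: a_def b_def)
  have da: "d x a < \<epsilon>/8" using cell_small[OF assms(1) rep_in[OF assms(1)], of 0] by (simp add: a_def)
  have db: "d y b < \<epsilon>/8" using cell_small[OF assms(2) rep_in[OF assms(2)], of 0] by (simp add: b_def)
  have t1: "d x y \<le> d x a + d a b + d b y" using triangle[OF assms(1) ab(1) assms(2)] triangle[OF ab(1) ab(2) assms(2)] by simp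
  have t2: "d a b \<le> d a x + d x y + d y b" using triangle[OF ab(1) assms(1) ab(2)] triangle[OF assms(1) assms(2) ab(2)] by simp
  have F: "F x y = ratup (d a b)" using False by (simp add: F_def a_def b_def)
  have r: "d a b + \<epsilon>/8 \<le> ratup (d a b)" "ratup (d a b) \<le> d a b + \<epsilon>/4" using ratup by blast+
  have "ratup (d a b) - d x y \<le> \<epsilon>/2" "d x y - ratup (d a b) \<le> \<epsilon>/2"
    using r t1 t2 da db commute[of x a] commute[of y b] by linarith+
  then show ?thesis unfolding F abs_le_iff by linarith
qed

lemma e_nonneg: "0 \<le> e x y" unfolding e_def using F_nonneg U_nonneg by simp

lemma e_metric: "Metric_space M e"
proof
  fix x y show "0 \<le> e x y" by (rule e_nonneg)
  show "e x y = e y x" unfolding e_def using F_sym U_sym by simp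
next
  fix x y assume xy: "x \<in> M" "y \<in> M"
  show "e x y = 0 \<longleftrightarrow> x = y"
  proof
    assume "x = y" then show "e x y = 0"
      unfolding e_def F_def U_def Si_def sep_def by simp
  next
    assume h: "e x y = 0"
    show "x = y"
    proof (rule ccontr)
      assume "x \<noteq> y"
      then have "0 < (1/10)^K * U x y" using U_pos[OF xy] by simp
      then show False using h F_nonneg[of x y] unfolding e_def by linarith
    qed
  qed
next
  fix x y z assume xyz: "x \<in> M" "y \<in> M" "z \<in> M"
  have "(1/10::real)^K * U x z \<le> (1/10)^K * U x y + (1/10)^K * U y z"
    using U_tri[of x z y] by (simp add: distrib_left[symmetric])
  then show "e x z \<le> e x y + e y z" using F_tri[OF xyz] unfolding e_def by linarith
qed

lemma e_small: assumes "x \<in> M" "y \<in> M" "e x y < (1/10)^K * (1/10)^(N*N)"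
  shows "d x y < \<epsilon> / (8 * real (Suc N))"
proof (rule ccontr)
  assume "\<not> ?thesis"
  then have "sep N x y" using sep_of_far assms by force
  then have "(1/10)^(N*N) \<le> U x y" by (rule U_ge)
  then have "(1/10::real)^K * (1/10)^(N*N) \<le> (1/10)^K * U x y" by (simp add: mult_left_mono)
  then show False using assms(3) F_nonneg[of x y] unfolding e_def by linarith
qed

lemma e_topology: "Metric_space.mtopology M e = mtopology"
proof -
  interpret E: Metric_space M e by (rule e_metric)
  have "mtopology = E.mtopology"
  proof (rule mtopology_eqI[OF Metric_space_axioms e_metric])
    fix x and r :: real assume x: "x \<in> M" and r: "r > 0"
    obtain N where N: "(1/10::real)^N < r"
      using real_arch_pow_inv[of r "1/10"] r by auto
    define V where "V = (\<Inter>i\<in>{..N}. cell i x)"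
    have "openin mtopology V" unfolding V_def using cell_open[OF x] by (intro openin_INT2) auto
    moreover have "x \<in> V" unfolding V_def using cell_in[OF x] by auto
    ultimately obtain s where s: "s > 0" "mball x s \<subseteq> V" unfolding openin_mtopology by blast
    have "mball x s \<subseteq> E.mball x r"
    proof
      fix y assume y: "y \<in> mball x s"
      then have yM: "y \<in> M" and yV: "y \<in> V" using s by auto
      have c: "\<forall>i\<le>N. cell i x = cell i y" using yV x yM cell_same unfolding V_def by auto
      then have "F x y = 0" unfolding F_def by auto
      moreover have "U x y \<le> (1/10)^N" by (rule U_tail[OF c])
      moreover have "(1/10::real)^K \<le> 1" by (simp add: power_le_one)
      moreover have "(1/10::real)^K * U x y \<le> U x y"
        by (rule mult_left_le_one_le) (use U_nonneg[of x y] \<open>(1/10::real)^K \<le> 1\<close> in auto)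
      ultimately have "e x y \<le> (1/10)^N" unfolding e_def by linarith
      then show "y \<in> E.mball x r" using N x yM by simp
    qed
    then show "\<exists>s>0. mball x s \<subseteq> E.mball x r" using s by blast
  next
    fix x and r :: real assume x: "x \<in> M" and r: "r > 0"
    obtain N where N: "\<epsilon> / (8 * real (Suc N)) < r" using mesh_small[OF r] by blast
    have "E.mball x ((1/10)^K * (1/10)^(N*N)) \<subseteq> mball x r"
    proof
      fix y assume "y \<in> E.mball x ((1/10)^K * (1/10)^(N*N))"
      then have "y \<in> M" "e x y < (1/10)^K * (1/10)^(N*N)" by auto
      then have "d x y < \<epsilon> / (8 * real (Suc N))" using e_small x by blast
      then show "y \<in> mball x r" using N x \<open>y \<in> M\<close> by simp
    qed
    then show "\<exists>s>0. E.mball x s \<subseteq> mball x r" by (intro exI[of _ "(1/10)^K * (1/10)^(N*N)"]) auto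
  qed
  then show ?thesis by simp
qed

lemma e_close: assumes "x \<in> M" "y \<in> M" shows "\<bar>d x y - e x y\<bar> \<le> \<epsilon>"
proof -
  have "(1/10::real)^K * U x y \<le> (\<epsilon>/10) * (20/9)"
    using Kb U_le[of x y] U_nonneg[of x y] eps by (intro mult_mono) auto
  moreover have "F x y - d x y \<le> \<epsilon>/2" "d x y - F x y \<le> \<epsilon>/2" using F_close[OF assms, unfolded abs_le_iff] by linarith+
  moreover have "0 \<le> (1/10::real)^K * U x y" using U_nonneg[of x y] by simp
  ultimately have "d x y - e x y \<le> \<epsilon>" "e x y - d x y \<le> \<epsilon>" using eps unfolding e_def by linarith+
  then show ?thesis unfolding abs_le_iff by linarith
qed

lemma e_complete: assumes "mcomplete" shows "Metric_space.mcomplete M e"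
proof -
  interpret E: Metric_space M e by (rule e_metric)
  show ?thesis unfolding E.mcomplete_def
  proof (intro allI impI)
    fix \<sigma> assume C: "E.MCauchy \<sigma>"
    have "MCauchy \<sigma>" unfolding MCauchy_def
    proof (intro conjI allI impI)
      show "range \<sigma> \<subseteq> M" using C E.MCauchy_def by blast
      fix r :: real assume r: "r > 0"
      obtain N where N: "\<epsilon> / (8 * real (Suc N)) < r" using mesh_small[OF r] by blast
      obtain N' where N': "\<forall>n n'. N' \<le> n \<longrightarrow> N' \<le> n' \<longrightarrow> e (\<sigma> n) (\<sigma> n') < (1/10)^K * (1/10)^(N*N)"
      proof -
        have pos: "0 < (1/10::real)^K * (1/10)^(N*N)" by simp
        show ?thesis using C pos that unfolding E.MCauchy_def by blast
      qed
      show "\<exists>N. \<forall>n n'. N \<le> n \<longrightarrow> N \<le> n' \<longrightarrow> d (\<sigma> n) (\<sigma> n') < r"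
      proof (intro exI[of _ N'] allI impI)
        fix n n' assume "N' \<le> n" "N' \<le> n'"
        then have "e (\<sigma> n) (\<sigma> n') < (1/10)^K * (1/10)^(N*N)" using N' by blast
        moreover have "\<sigma> n \<in> M" "\<sigma> n' \<in> M" using \<open>range \<sigma> \<subseteq> M\<close> by auto
        ultimately show "d (\<sigma> n) (\<sigma> n') < r" using e_small N by fastforce
      qed
    qed
    then obtain x where "limitin mtopology \<sigma> x sequentially" using assms unfolding mcomplete_def by blast
    then show "\<exists>x. limitin E.mtopology \<sigma> x sequentially" using e_topology by auto
  qed
qed

end



lemma qe_surj: assumes "q \<in> \<rat>" shows "\<exists>k. qe k = q"
proof -
  obtain r where "q = of_rat r" using assms by (rule Rats_cases)
  then show ?thesis unfolding qe_def by (intro exI[of _ "to_nat r"]) simp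
qed

lemma rat_interval_inf:
  fixes lo hi :: real
  assumes "lo < hi" shows "\<exists>k\<ge>K0. lo < qe k \<and> qe k < hi"
proof (rule ccontr)
  assume H: "\<not> ?thesis"
  define T where "T = {q\<in>\<rat>. lo < q \<and> q < hi}"
  have "T \<subseteq> qe ` {..<K0}"
  proof
    fix q assume q: "q \<in> T"
    then obtain k where k: "qe k = q" using qe_surj unfolding T_def by blast
    have "k < K0"
    proof (rule ccontr)
      assume "\<not> k < K0"
      then have "k \<ge> K0" by simp
      then show False using H q k unfolding T_def by auto
    qed
    then show "q \<in> qe ` {..<K0}" using k by blast
  qed
  then have fin: "finite T" by (rule finite_subset) simp
  obtain q0 where q0: "q0 \<in> \<rat>" "lo < q0" "q0 < hi" using Rats_dense_in_real[OF assms] by blast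
  then have ne: "T \<noteq> {}" unfolding T_def by blast
  define m where "m = Min T"
  have mT: "m \<in> T" unfolding m_def using fin ne by (rule Min_in)
  then have "lo < m" unfolding T_def by blast
  then obtain q1 where q1: "q1 \<in> \<rat>" "lo < q1" "q1 < m" using Rats_dense_in_real by blast
  have "q1 \<in> T" using q1 mT unfolding T_def by auto
  then have "m \<le> q1" unfolding m_def by (rule Min_le[OF fin])
  then show False using q1 by simp
qed

lemma bit_diff: fixes a a' :: real assumes "a \<noteq> a'" shows "\<exists>k\<ge>K0. (a < qe k) \<noteq> (a' < qe k)"
proof (cases "a < a'")
  case True
  then obtain k where "k \<ge> K0" "a < qe k" "qe k < a'" using rat_interval_inf by blast
  then show ?thesis by (intro exI[of _ k]) auto
next
  case False
  then have "a' < a" using assms by simp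
  then obtain k where "k \<ge> K0" "a' < qe k" "qe k < a" using rat_interval_inf by blast
  then show ?thesis by (intro exI[of _ k]) auto
qed

lemma bit_true: fixes a :: real shows "\<exists>k\<ge>K0. a < qe k"
  using rat_interval_inf[of a "a+1" K0] by auto

lemma bit_false: fixes a :: real shows "\<exists>k\<ge>K0. \<not> a < qe k"
  using rat_interval_inf[of "a-1" a K0] by auto

lemma bitc_even: "bitc (2*k) p = (fst p < qe k)" unfolding bitc_def by simp
lemma bitc_odd: "bitc (2*k+1) p = (snd p < qe k)" unfolding bitc_def by simp

lemma minmax_eq: fixes A B C D :: real
  assumes "(min A B, max A B) = (min C D, max C D)" shows "(A = C \<and> B = D) \<or> (A = D \<and> B = C)"
  using assms by (auto simp: min_def max_def split: if_splits)

lemma rat_as_frac: "\<exists>A D. D > 0 \<and> (of_rat a :: real) = of_int A / of_int D"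
proof -
  obtain A D where q: "quotient_of a = (A, D)" by (cases "quotient_of a") auto
  have "D > 0" using quotient_of_denom_pos[OF q] .
  moreover have "a = of_int A / of_int D" using quotient_of_div[OF q] .
  then have "(of_rat a :: real) = of_int A / of_int D" by (simp add: of_rat_divide)
  ultimately show ?thesis by blast
qed

context LIcon
begin

lemma Si_enc: "Si (prod_encode (N, j)) x y = (if sep (prod_encode (N, j)) x y then (if bitc j (code N x y) then 2 else 1) else 0)"
  unfolding Si_def by simp

lemma sep_mono: "sep N x y \<Longrightarrow> N \<le> n \<Longrightarrow> sep n x y"
  unfolding sep_def by (meson order_trans)

lemma sep_ev: assumes "x \<in> M" "y \<in> M" "x \<noteq> y" shows "\<exists>N. sep N x y"
proof -
  have "0 < d x y" using assms by simp
  then obtain N where N: "\<epsilon> / (8 * real (Suc N)) < d x y" using mesh_small by blast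
  have "sep N x y" by (rule sep_of_far) (use assms N in auto)
  then show ?thesis by blast
qed

lemma Si_sep: "sep n x y \<Longrightarrow> Si n x y = 1 \<or> Si n x y = 2" by (rule Si_12)

lemma digits12: assumes "x \<in> M" "y \<in> M" "x \<noteq> y"
  shows "\<exists>n\<ge>n0. Si n x y = 1" "\<exists>n\<ge>n0. Si n x y = 2"
proof -
  obtain N where N: "sep N x y" using sep_ev[OF assms] by blast
  obtain k where k: "k \<ge> n0" "\<not> fst (code N x y) < qe k" using bit_false by blast
  define n where "n = prod_encode (N, 2*k)"
  have "n \<ge> 2*k" "n \<ge> N" unfolding n_def using le_prod_encode_1 le_prod_encode_2 by auto
  then have "n \<ge> n0" "sep n x y" using k N sep_mono by auto
  then have "Si n x y = 1" unfolding n_def Si_enc using k(2) by (simp add: bitc_even)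
  then show "\<exists>n\<ge>n0. Si n x y = 1" using \<open>n \<ge> n0\<close> by blast
  obtain k where k: "k \<ge> n0" "fst (code N x y) < qe k" using bit_true by blast
  define n where "n = prod_encode (N, 2*k)"
  have "n \<ge> 2*k" "n \<ge> N" unfolding n_def using le_prod_encode_1 le_prod_encode_2 by auto
  then have "n \<ge> n0" "sep n x y" using k N sep_mono by auto
  then have "Si n x y = 2" unfolding n_def Si_enc using k(2) by (simp add: bitc_even)
  then show "\<exists>n\<ge>n0. Si n x y = 2" using \<open>n \<ge> n0\<close> by blast
qed

lemma digits_diff:
  assumes M: "x \<in> M" "y \<in> M" "u \<in> M" "v \<in> M" and ne: "x \<noteq> y" "u \<noteq> v" "{x, y} \<noteq> {u, v}"
  shows "\<exists>n\<ge>n0. sep n x y \<and> sep n u v \<and> Si n x y \<noteq> Si n u v"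
proof -
  obtain z where z: "z \<in> {x, y}" "z \<notin> {u, v}" using ne by blast
  have zM: "z \<in> M" using z M by auto
  have pos: "0 < min (min (d z u) (d z v)) (min (d x y) (d u v))" using z M ne zM by auto
  obtain N where N: "\<epsilon> / (8 * real (Suc N)) < min (min (d z u) (d z v)) (min (d x y) (d u v))"
    using mesh_small[OF pos] by blast
  have sxy: "sep N x y" by (rule sep_of_far) (use M N in auto)
  have suv: "sep N u v" by (rule sep_of_far) (use M N in auto)
  have czu: "cell N z \<noteq> cell N u"
  proof
    assume "cell N z = cell N u"
    then have "u \<in> cell N z" using cell_same zM M by blast
    then show False using cell_small[OF zM, of u N] N by auto
  qed
  have czv: "cell N z \<noteq> cell N v"
  proof
    assume "cell N z = cell N v"
    then have "v \<in> cell N z" using cell_same zM M by blast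
    then show False using cell_small[OF zM, of v N] N by auto
  qed
  have cd: "code N x y \<noteq> code N u v"
  proof
    assume "code N x y = code N u v"
    then have "(\<iota> (rep N x) = \<iota> (rep N u) \<and> \<iota> (rep N y) = \<iota> (rep N v)) \<or> (\<iota> (rep N x) = \<iota> (rep N v) \<and> \<iota> (rep N y) = \<iota> (rep N u))"
      unfolding code_def by (rule minmax_eq)
    then have "\<iota> (rep N z) = \<iota> (rep N u) \<or> \<iota> (rep N z) = \<iota> (rep N v)" using z by auto
    then have "rep N z = rep N u \<or> rep N z = rep N v" using inj rep_M zM M unfolding inj_on_def by blast
    then have "cell N z = cell N u \<or> cell N z = cell N v" using rep_cell zM M by blast
    then show False using czu czv by blast
  qed
  obtain j where j: "j \<ge> n0" "bitc j (code N x y) \<noteq> bitc j (code N u v)"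
  proof (cases "fst (code N x y) = fst (code N u v)")
    case True
    then have "snd (code N x y) \<noteq> snd (code N u v)" using cd by (simp add: prod_eq_iff)
    then obtain k where k: "k \<ge> n0" "(snd (code N x y) < qe k) \<noteq> (snd (code N u v) < qe k)" using bit_diff by blast
    have "bitc (2*k+1) (code N x y) \<noteq> bitc (2*k+1) (code N u v)" unfolding bitc_odd using k(2) by blast
    moreover have "2*k+1 \<ge> n0" using k(1) by simp
    ultimately show ?thesis using that[of "2*k+1"] by blast
  next
    case False
    then obtain k where k: "k \<ge> n0" "(fst (code N x y) < qe k) \<noteq> (fst (code N u v) < qe k)" using bit_diff by blast
    have "bitc (2*k) (code N x y) \<noteq> bitc (2*k) (code N u v)" unfolding bitc_even using k(2) by blast
    moreover have "2*k \<ge> n0" using k(1) by simp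
    ultimately show ?thesis using that[of "2*k"] by blast
  qed
  define n where "n = prod_encode (N, j)"
  have "n \<ge> j" "n \<ge> N" unfolding n_def using le_prod_encode_1 le_prod_encode_2 by auto
  then have n: "n \<ge> n0" "sep n x y" "sep n u v" using j sxy suv sep_mono by auto
  have "Si n x y \<noteq> Si n u v" unfolding n_def Si_enc using n j(2) unfolding n_def by simp
  then show ?thesis using n by blast
qed

lemma e_LI:
  assumes M: "x \<in> M" "y \<in> M" "u \<in> M" "v \<in> M" and ne: "x \<noteq> y" "u \<noteq> v" "{x, y} \<noteq> {u, v}"
  shows "rat_lin_indep2 (e x y) (e u v)"
  unfolding rat_lin_indep2_def
proof (intro allI impI)
  fix a b :: rat
  assume rel: "of_rat a * e x y + of_rat b * e u v = 0"
  obtain A1 D1 where AD1: "D1 > 0" "(of_rat a :: real) = of_int A1 / of_int D1" using rat_as_frac by blast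
  obtain B1 D2 where BD2: "D2 > 0" "(of_rat b :: real) = of_int B1 / of_int D2" using rat_as_frac by blast
  define P where "P = A1 * D2"
  define Q where "Q = B1 * D1"
  define w :: real where "w = (1/10)^K"
  have w: "w > 0" "w \<in> \<rat>" unfolding w_def by simp_all
  have rel2: "of_int P * e x y + of_int Q * e u v = 0"
  proof -
    have hP: "(of_int P :: real) = of_rat a * of_int (D1*D2)" using AD1 unfolding P_def by (simp add: field_simps)
    have hQ: "(of_int Q :: real) = of_rat b * of_int (D1*D2)" using BD2 unfolding Q_def by (simp add: field_simps)
    have "of_int P * e x y + of_int Q * e u v = of_int (D1*D2) * (of_rat a * e x y + of_rat b * e u v)"
      unfolding hP hQ by (simp add: algebra_simps)
    then show ?thesis using rel by simp
  qed
  define c where "c n = P * Si n x y + Q * Si n u v" for n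
  have sumc: "(\<Sum>n. real_of_int (c n) * (1/10)^(n*n)) = of_int P * U x y + of_int Q * U u v"
  proof -
    have "of_int P * U x y = (\<Sum>n. of_int P * (real_of_int (Si n x y) * (1/10::real)^(n*n)))"
      unfolding U_def by (rule suminf_mult[symmetric]) (rule summ)
    moreover have "of_int Q * U u v = (\<Sum>n. of_int Q * (real_of_int (Si n u v) * (1/10::real)^(n*n)))"
      unfolding U_def by (rule suminf_mult[symmetric]) (rule summ)
    moreover have "(\<Sum>n. of_int P * (real_of_int (Si n x y) * (1/10::real)^(n*n))) + (\<Sum>n. of_int Q * (real_of_int (Si n u v) * (1/10::real)^(n*n)))
        = (\<Sum>n. of_int P * (real_of_int (Si n x y) * (1/10::real)^(n*n)) + of_int Q * (real_of_int (Si n u v) * (1/10::real)^(n*n)))"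
      by (intro suminf_add summable_mult summ)
    ultimately show ?thesis unfolding c_def by (simp add: algebra_simps)
  qed
  have "of_int P * U x y + of_int Q * U u v = - (of_int P * F x y + of_int Q * F u v) / w"
    using rel2 w(1) unfolding e_def w_def[symmetric] by (simp add: field_simps)
  also have "\<dots> \<in> \<rat>" using F_rat w(2) by simp
  finally have crat: "(\<Sum>n. real_of_int (c n) * (1/10)^(n*n)) \<in> \<rat>" unfolding sumc .
  have cb: "\<bar>real_of_int (c n)\<bar> \<le> 2 * \<bar>of_int P\<bar> + 2 * \<bar>of_int Q\<bar>" for n
  proof -
    have "\<bar>c n\<bar> \<le> \<bar>P * Si n x y\<bar> + \<bar>Q * Si n u v\<bar>" unfolding c_def by (rule abs_triangle_ineq)
    also have "\<dots> = \<bar>P\<bar> * Si n x y + \<bar>Q\<bar> * Si n u v" using Si_bounds by (simp add: abs_mult)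
    also have "\<dots> \<le> \<bar>P\<bar> * 2 + \<bar>Q\<bar> * 2" using Si_bounds by (intro add_mono mult_left_mono) auto
    finally show ?thesis by linarith
  qed
  obtain N0 where N0: "\<forall>n\<ge>N0. c n = 0" using liouville_like[OF cb crat] by blast
  obtain Nq where Nq: "sep Nq u v" using sep_ev M ne by blast
  obtain Np where Np: "sep Np x y" using sep_ev M ne by blast
  obtain n1 where n1: "n1 \<ge> N0" "sep n1 x y" "sep n1 u v" "Si n1 x y \<noteq> Si n1 u v"
    using digits_diff[OF M ne] by blast
  have c1: "P * Si n1 x y + Q * Si n1 u v = 0" using N0 n1 unfolding c_def by blast
  have PQ: "P = 0 \<and> Q = 0"
  proof (cases "Si n1 x y = 1")
    case True
    then have "Si n1 u v = 2" using Si_12[OF n1(3)] n1(4) by auto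
    then have e1: "P + 2 * Q = 0" using c1 True by simp
    obtain n2 where n2: "n2 \<ge> max N0 Nq" "Si n2 x y = 2" using digits12(2)[OF M(1,2) ne(1)] by blast
    have "sep n2 u v" using sep_mono[OF Nq] n2 by auto
    then have "Si n2 u v = 1 \<or> Si n2 u v = 2" by (rule Si_12)
    moreover have "P * Si n2 x y + Q * Si n2 u v = 0" using N0 n2 unfolding c_def by auto
    ultimately show ?thesis using e1 n2(2) by auto
  next
    case False
    then have "Si n1 x y = 2" using Si_12[OF n1(2)] by auto
    then have "Si n1 u v = 1" using Si_12[OF n1(3)] n1(4) by auto
    then have e1: "2 * P + Q = 0" using c1 \<open>Si n1 x y = 2\<close> by simp
    obtain n2 where n2: "n2 \<ge> max N0 Nq" "Si n2 x y = 1" using digits12(1)[OF M(1,2) ne(1)] by blast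
    have "sep n2 u v" using sep_mono[OF Nq] n2 by auto
    then have "Si n2 u v = 1 \<or> Si n2 u v = 2" by (rule Si_12)
    moreover have "P * Si n2 x y + Q * Si n2 u v = 0" using N0 n2 unfolding c_def by auto
    ultimately show ?thesis using e1 n2(2) by auto
  qed
  then have "A1 = 0" "B1 = 0" using AD1(1) BD2(1) unfolding P_def Q_def by auto
  then show "a = 0 \<and> b = 0" using AD1(2) BD2(2) by simp
qed

end



lemma core:
  fixes d :: "'a \<Rightarrow> 'a \<Rightarrow> real"
  assumes D: "Metric_space M d" and sz: "strongly_zero_dimensional (Metric_space.mtopology M d)"
    and card: "M \<lesssim> (UNIV :: real set)" and eps: "\<epsilon> > 0"
  shows "\<exists>e. Metric_space M e \<and> Metric_space.mtopology M e = Metric_space.mtopology M d \<and>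
     (\<forall>x\<in>M. \<forall>y\<in>M. \<bar>d x y - e x y\<bar> \<le> \<epsilon>) \<and>
     (\<forall>x\<in>M. \<forall>y\<in>M. \<forall>u\<in>M. \<forall>v\<in>M. x \<noteq> y \<and> u \<noteq> v \<and> {x, y} \<noteq> {u, v} \<longrightarrow> rat_lin_indep2 (e x y) (e u v)) \<and>
     (Metric_space.mcomplete M d \<longrightarrow> Metric_space.mcomplete M e)"
proof -
  interpret Metric_space M d by (rule D)
  have "\<forall>n. \<exists>cell. \<forall>x\<in>M. x \<in> cell x \<and> cell x \<subseteq> M \<and> openin mtopology (cell x) \<and>
           (\<forall>y\<in>cell x. cell y = cell x \<and> d x y < \<epsilon> / (8 * real (Suc n)))"
    using clopen_partition[OF sz] eps by simp
  then obtain cellf where cf: "\<forall>n. \<forall>x\<in>M. x \<in> cellf n x \<and> cellf n x \<subseteq> M \<and> openin mtopology (cellf n x) \<and>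
           (\<forall>y\<in>cellf n x. cellf n y = cellf n x \<and> d x y < \<epsilon> / (8 * real (Suc n)))"
    using choice[of "\<lambda>n cell. \<forall>x\<in>M. x \<in> cell x \<and> cell x \<subseteq> M \<and> openin mtopology (cell x) \<and>
           (\<forall>y\<in>cell x. cell y = cell x \<and> d x y < \<epsilon> / (8 * real (Suc n)))"] by blast
  obtain \<iota> :: "'a \<Rightarrow> real" where inj: "inj_on \<iota> M" using card unfolding lepoll_def by blast
  obtain K where K: "(1/10::real)^K < \<epsilon>/10" using real_arch_pow_inv[of "\<epsilon>/10" "1/10"] eps by auto
  interpret L: LIcon M d cellf \<iota> \<epsilon> K
  proof
    fix x n assume x: "x \<in> M"
    show "x \<in> cellf n x" "cellf n x \<subseteq> M" "openin mtopology (cellf n x)" using cf x by blast+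
    fix y assume "y \<in> cellf n x"
    then show "cellf n y = cellf n x" "d x y < \<epsilon> / (8 * real (Suc n))" using cf x by blast+
  next
    show "inj_on \<iota> M" by (rule inj)
    show "\<epsilon> > 0" by (rule eps)
    show "(1/10::real)^K \<le> \<epsilon>/10" using K by simp
  qed
  show ?thesis
    using L.e_metric L.e_topology L.e_close L.e_LI L.e_complete by (intro exI[of _ L.e]) auto
qed

lemma abs3: "\<bar>a - c\<bar> \<le> \<bar>a - b\<bar> + \<bar>b - (c::real)\<bar>" by arith

lemma min_tri: fixes a b z c :: real
  assumes "0 \<le> a" "0 \<le> b" "z \<le> a + b" "0 < c" shows "min c z \<le> min c a + min c b"
  using assms by (auto simp: min_def)

lemma perturb_complete:
  fixes d \<rho> :: "'a \<Rightarrow> 'a \<Rightarrow> real"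
  assumes D: "Metric_space M d" and R: "Metric_space M \<rho>" and top: "Metric_space.mtopology M \<rho> = Metric_space.mtopology M d"
    and c: "c > 0" and comp: "Metric_space.mcomplete M \<rho>"
  defines "d' \<equiv> \<lambda>x y. d x y + min c (\<rho> x y)"
  shows "Metric_space M d' \<and> Metric_space.mtopology M d' = Metric_space.mtopology M d \<and> Metric_space.mcomplete M d'
     \<and> (\<forall>x y. \<bar>d x y - d' x y\<bar> \<le> c)"
proof -
  interpret D: Metric_space M d by (rule D)
  interpret R: Metric_space M \<rho> by (rule R)
  have dM: "Metric_space M d'"
  proof
    fix x y show "0 \<le> d' x y" unfolding d'_def using c by simp
    show "d' x y = d' y x" unfolding d'_def by (simp add: D.commute R.commute)
  next
    fix x y assume xy: "x \<in> M" "y \<in> M"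
    show "d' x y = 0 \<longleftrightarrow> x = y"
    proof
      assume h: "d' x y = 0"
      have "0 \<le> min c (\<rho> x y)" using c by simp
      then have "d x y = 0" using h D.nonneg[of x y] unfolding d'_def by linarith
      then show "x = y" using xy by simp
    qed (use xy c in \<open>simp add: d'_def\<close>)
  next
    fix x y z assume xyz: "x \<in> M" "y \<in> M" "z \<in> M"
    have "d x z \<le> d x y + d y z" by (rule D.triangle[OF xyz])
    moreover have "\<rho> x z \<le> \<rho> x y + \<rho> y z" by (rule R.triangle[OF xyz])
    then have "min c (\<rho> x z) \<le> min c (\<rho> x y) + min c (\<rho> y z)" by (intro min_tri c) auto
    ultimately show "d' x z \<le> d' x y + d' y z" unfolding d'_def by linarith
  qed
  interpret D': Metric_space M d' by (rule dM)
  have le: "d x y \<le> d' x y" for x y unfolding d'_def using c by simp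
  have topeq: "D.mtopology = D'.mtopology"
  proof (rule mtopology_eqI[OF D dM])
    fix x and r :: real assume x: "x \<in> M" and r: "r > 0"
    have "openin D.mtopology (R.mball x (r/2))" using R.openin_mball top by metis
    moreover have "x \<in> R.mball x (r/2)" using x r by simp
    ultimately obtain s1 where s1: "s1 > 0" "D.mball x s1 \<subseteq> R.mball x (r/2)" unfolding D.openin_mtopology by blast
    have "D.mball x (min s1 (r/2)) \<subseteq> D'.mball x r"
    proof
      fix y assume y: "y \<in> D.mball x (min s1 (r/2))"
      then have "y \<in> R.mball x (r/2)" using s1 by auto
      then have "\<rho> x y < r/2" by simp
      moreover have "d x y < r/2" using y by simp
      ultimately have "d' x y < r" unfolding d'_def by (simp add: min_def)
      then show "y \<in> D'.mball x r" using y by simp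
    qed
    then show "\<exists>s>0. D.mball x s \<subseteq> D'.mball x r" using s1 r by (intro exI[of _ "min s1 (r/2)"]) auto
  next
    fix x and r :: real assume x: "x \<in> M" and r: "r > 0"
    have "D'.mball x r \<subseteq> D.mball x r"
    proof
      fix y assume y: "y \<in> D'.mball x r"
      then have "y \<in> M" "d' x y < r" by auto
      then show "y \<in> D.mball x r" using le[of x y] x by simp
    qed
    then show "\<exists>s>0. D'.mball x s \<subseteq> D.mball x r" using r by blast
  qed
  have compl: "D'.mcomplete" unfolding D'.mcomplete_def
  proof (intro allI impI)
    fix \<sigma> assume C: "D'.MCauchy \<sigma>"
    have "R.MCauchy \<sigma>" unfolding R.MCauchy_def
    proof (intro conjI allI impI)
      show "range \<sigma> \<subseteq> M" using C D'.MCauchy_def by blast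
      fix r :: real assume r: "r > 0"
      have "min r c > 0" using r c by simp
      then obtain N where N: "\<forall>n n'. N \<le> n \<longrightarrow> N \<le> n' \<longrightarrow> d' (\<sigma> n) (\<sigma> n') < min r c"
        using C unfolding D'.MCauchy_def by blast
      show "\<exists>N. \<forall>n n'. N \<le> n \<longrightarrow> N \<le> n' \<longrightarrow> \<rho> (\<sigma> n) (\<sigma> n') < r"
      proof (intro exI[of _ N] allI impI)
        fix n n' assume "N \<le> n" "N \<le> n'"
        then have h: "d' (\<sigma> n) (\<sigma> n') < min r c" using N by blast
        have "min c (\<rho> (\<sigma> n) (\<sigma> n')) < min r c" using h D.nonneg[of "\<sigma> n" "\<sigma> n'"] unfolding d'_def by linarith
        then show "\<rho> (\<sigma> n) (\<sigma> n') < r" by (simp add: min_def split: if_splits)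
      qed
    qed
    then obtain x where "limitin R.mtopology \<sigma> x sequentially" using comp unfolding R.mcomplete_def by blast
    then show "\<exists>x. limitin D'.mtopology \<sigma> x sequentially" using top topeq by auto
  qed
  have ab: "\<forall>x y. \<bar>d x y - d' x y\<bar> \<le> c" unfolding d'_def using c by simp
  show ?thesis using dM topeq[symmetric] compl ab by blast
qed

theorem theorem1p1:
  fixes X :: "'a topology"
  assumes "metrizable_space X"
    and "strongly_zero_dimensional X"
    and "topspace X \<lesssim> (UNIV :: real set)"
  shows "(\<forall>d \<in> Met X. \<forall>\<epsilon>::real. \<epsilon> > 0 \<longrightarrow>
            (\<exists>e \<in> LI X. sup_metric_dist X d e \<le> ereal \<epsilon>))
       \<and> (completely_metrizable_space X \<longrightarrow>
           (\<forall>d \<in> Met X. \<forall>\<epsilon>::real. \<epsilon> > 0 \<longrightarrow>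
              (\<exists>e \<in> LI X. sup_metric_dist X d e \<le> ereal \<epsilon> \<and>
                 Metric_space.mcomplete (topspace X) e)))"
proof -
  define M where "M = topspace X"
  have main: "\<exists>e \<in> LI X. sup_metric_dist X d e \<le> ereal \<epsilon> \<and> (Metric_space.mcomplete M d \<longrightarrow> Metric_space.mcomplete M e)"
    if dM: "d \<in> Met X" and eps: "\<epsilon> > 0" for d \<epsilon>
  proof -
    have D: "Metric_space M d" and top: "Metric_space.mtopology M d = X" using dM unfolding Met_def M_def by auto
    have sz: "strongly_zero_dimensional (Metric_space.mtopology M d)" using assms(2) top by simp
    have card: "M \<lesssim> (UNIV :: real set)" using assms(3) unfolding M_def .
    obtain e where eall: "Metric_space M e \<and> Metric_space.mtopology M e = Metric_space.mtopology M d \<and>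
      (\<forall>x\<in>M. \<forall>y\<in>M. \<bar>d x y - e x y\<bar> \<le> \<epsilon>) \<and>
      (\<forall>x\<in>M. \<forall>y\<in>M. \<forall>u\<in>M. \<forall>v\<in>M. x \<noteq> y \<and> u \<noteq> v \<and> {x, y} \<noteq> {u, v} \<longrightarrow> rat_lin_indep2 (e x y) (e u v)) \<and>
      (Metric_space.mcomplete M d \<longrightarrow> Metric_space.mcomplete M e)"
      by (rule exE[OF core[OF D sz card eps]], rule that, assumption)
    note e = eall[THEN conjunct1] eall[THEN conjunct2, THEN conjunct1]
      eall[THEN conjunct2, THEN conjunct2, THEN conjunct1]
      eall[THEN conjunct2, THEN conjunct2, THEN conjunct2, THEN conjunct1]
      eall[THEN conjunct2, THEN conjunct2, THEN conjunct2, THEN conjunct2]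
    have "Metric_space (topspace X) e" using e(1) unfolding M_def .
    moreover have "Metric_space.mtopology (topspace X) e = X" using e(2) top unfolding M_def by simp
    ultimately have "e \<in> Met X" unfolding Met_def by blast
    then have "e \<in> LI X" unfolding LI_def using e(4) unfolding M_def by blast
    moreover have "sup_metric_dist X d e \<le> ereal \<epsilon>"
      unfolding sup_metric_dist_def by (rule SUP_least) (use e(3) in \<open>auto simp: M_def\<close>)
    ultimately show ?thesis using e(5) by blast
  qed
  show ?thesis
  proof (intro conjI impI allI ballI)
    fix d \<epsilon> assume "d \<in> Met X" "(\<epsilon>::real) > 0"
    then show "\<exists>e \<in> LI X. sup_metric_dist X d e \<le> ereal \<epsilon>" using main by blast
  next
    fix d and \<epsilon> :: real assume cm: "completely_metrizable_space X" and dM: "d \<in> Met X" and eps: "\<epsilon> > 0"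
    obtain M' \<rho> where R: "Metric_space M' \<rho>" "Metric_space.mcomplete M' \<rho>" "X = Metric_space.mtopology M' \<rho>"
      using cm unfolding completely_metrizable_space_def by blast
    have M': "M' = M" unfolding M_def using Metric_space.topspace_mtopology[OF R(1)] R(3) by simp
    have RM: "Metric_space M \<rho>" using R(1) M' by simp
    have RC: "Metric_space.mcomplete M \<rho>" using R(2) M' by simp
    have Rtop: "Metric_space.mtopology M \<rho> = X" using R(3) M' by simp
    have D: "Metric_space M d" and top: "Metric_space.mtopology M d = X" using dM unfolding Met_def M_def by auto
    define d' where "d' = (\<lambda>x y. d x y + min (\<epsilon>/2) (\<rho> x y))"
    have P: "Metric_space M d' \<and> Metric_space.mtopology M d' = Metric_space.mtopology M d \<and> Metric_space.mcomplete M d'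
     \<and> (\<forall>x y. \<bar>d x y - d' x y\<bar> \<le> \<epsilon>/2)"
    proof -
      have "Metric_space.mtopology M \<rho> = Metric_space.mtopology M d" using Rtop top by simp
      moreover have "\<epsilon>/2 > 0" using eps by simp
      ultimately show ?thesis unfolding d'_def by (rule perturb_complete[OF D RM _ _ RC])
    qed
    have "Metric_space (topspace X) d'" using P unfolding M_def by blast
    moreover have "Metric_space.mtopology (topspace X) d' = X" using P top unfolding M_def by simp
    ultimately have d'M: "d' \<in> Met X" unfolding Met_def by blast
    obtain e where e: "e \<in> LI X" "sup_metric_dist X d' e \<le> ereal (\<epsilon>/2)" "Metric_space.mcomplete M e"
    proof -
      have "\<epsilon>/2 > 0" using eps by simp
      moreover have "Metric_space.mcomplete M d'" using P by blast
      ultimately show ?thesis using main[OF d'M, of "\<epsilon>/2"] that by blast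
    qed
    have "sup_metric_dist X d e \<le> ereal \<epsilon>"
      unfolding sup_metric_dist_def
    proof (rule SUP_least)
      fix p assume p: "p \<in> topspace X \<times> topspace X"
      have "ereal \<bar>d' (fst p) (snd p) - e (fst p) (snd p)\<bar> \<le> sup_metric_dist X d' e"
        unfolding sup_metric_dist_def using p by (rule SUP_upper)
      then have "ereal \<bar>d' (fst p) (snd p) - e (fst p) (snd p)\<bar> \<le> ereal (\<epsilon>/2)" using e(2) by (rule order_trans)
      then have "\<bar>d' (fst p) (snd p) - e (fst p) (snd p)\<bar> \<le> \<epsilon>/2" by simp
      moreover have "\<bar>d (fst p) (snd p) - d' (fst p) (snd p)\<bar> \<le> \<epsilon>/2" using P by blast
      moreover have "\<bar>d (fst p) (snd p) - e (fst p) (snd p)\<bar> \<le> \<bar>d (fst p) (snd p) - d' (fst p) (snd p)\<bar> + \<bar>d' (fst p) (snd p) - e (fst p) (snd p)\<bar>"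
        by (rule abs3)
      ultimately have "\<bar>d (fst p) (snd p) - e (fst p) (snd p)\<bar> \<le> \<epsilon>" by linarith
      then show "ereal \<bar>d (fst p) (snd p) - e (fst p) (snd p)\<bar> \<le> ereal \<epsilon>" by simp
    qed
    then show "\<exists>e \<in> LI X. sup_metric_dist X d e \<le> ereal \<epsilon> \<and> Metric_space.mcomplete (topspace X) e"
      using e unfolding M_def by blast
  qed
qed


end
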